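(* For $n,i\in\mathbb{N}=\{1,2,\dots\}$, $$\int_{-\infty}^{\infty}\frac{|t|^i}{i!}|h_n(t)|\,dt\le\frac{1}{\sqrt{2^n\,n!\,i!\,\sqrt{\pi}}}.$$
   Context: $H_n$ denotes the $n$-th Hermite polynomial ($H_n(t)=(-1)^ne^{t^2}\frac{d^n}{dt^n}e^{-t^2}$, so $H_0=1$, $H_1(t)=2t$, $H_2(t)=4t^2-2$), and the Hermite functions are $h_n(t)=\frac{1}{2^nn!\sqrt{\pi}}e^{-t^2}H_n(t)$, $t\in\mathbb{R}$. *)

theory Defs
  imports "HOL-Analysis.Analysis"
begin

definition hermite_poly :: "nat \<Rightarrow> real \<Rightarrow> real" where
  "hermite_poly n t = (-1) ^ n * exp (t\<^sup>2) * ((deriv ^^ n) (\<lambda>s. exp (- (s\<^sup>2))) t)"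

definition hermite_fun :: "nat \<Rightarrow> real \<Rightarrow> real" where
  "hermite_fun n t = exp (- (t\<^sup>2)) * hermite_poly n t / (2 ^ n * fact n * sqrt pi)"

end

theory Submission imports Defs "HOL-Probability.Distributions" "HOL-Computational_Algebra.Polynomial"
begin


definition M :: "nat \<Rightarrow> real" where "M k = (\<integral>x. x ^ k * exp (- x\<^sup>2) \<partial>lborel)"

lemma mom_even: "has_bochner_integral lborel (\<lambda>x::real. x ^ (2*k) * exp (- x\<^sup>2))
      (sqrt pi * (fact (2 * k) / (2 ^ (2 * k) * fact k)))"
  using has_bochner_integral_even_function[OF gaussian_moment_even_pos[where k=k]]
  by (simp add: mult.commute)

lemma mom_odd: "has_bochner_integral lborel (\<lambda>x::real. x ^ (2*k+1) * exp (- x\<^sup>2)) 0"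
  using has_bochner_integral_odd_function[OF gaussian_moment_odd_pos[where k=k]]
  by (simp add: mult.commute)

lemma mom_int: "integrable lborel (\<lambda>x::real. x ^ k * exp (- x\<^sup>2))"
proof (cases "even k")
  case True then obtain j where "k = 2*j" by (auto elim: evenE)
  then show ?thesis using mom_even[of j] by (auto intro: integrable.intros)
next
  case False then obtain j where "k = 2*j+1" by (auto elim: oddE)
  then show ?thesis using mom_odd[of j] by (auto intro: integrable.intros)
qed

lemma M_even: "M (2*k) = sqrt pi * (fact (2 * k) / (2 ^ (2 * k) * fact k))"
  unfolding M_def using mom_even by (rule has_bochner_integral_integral_eq)
lemma M_odd: "M (2*k+1) = 0"
  unfolding M_def using mom_odd by (rule has_bochner_integral_integral_eq)

lemma M0: "M 0 = sqrt pi" using M_even[of 0] by simp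
lemma M1: "M 1 = 0" using M_odd[of 0] by simp

lemma M_rec: "M (k+2) = (real k + 1) / 2 * M k"
proof (cases "even k")
  case True then obtain j where k: "k = 2*j" by (auto elim: evenE)
  have "k + 2 = 2 * Suc j" using k by simp
  then have "M (k+2) = sqrt pi * (fact (2 * Suc j) / (2 ^ (2 * Suc j) * fact (Suc j)))"
    using M_even by metis
  also have "\<dots> = (real k + 1) / 2 * (sqrt pi * (fact (2 * j) / (2 ^ (2 * j) * fact j)))"
    unfolding k by (simp add: field_simps del: fact_Suc) (simp add: field_simps)
  finally show ?thesis using M_even k by simp
next
  case False then obtain j where k: "k = 2*j+1" by (auto elim: oddE)
  have "k + 2 = 2 * Suc j + 1" using k by simp
  then have "M (k+2) = 0" using M_odd by metis
  moreover have "M k = 0" using M_odd k by simp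
  ultimately show ?thesis by simp
qed


definition L :: "real poly \<Rightarrow> real" where
  "L p = (\<integral>x. poly p x * exp (- x\<^sup>2) \<partial>lborel)"

lemma L_int: "integrable lborel (\<lambda>x. poly (p::real poly) x * exp (- x\<^sup>2))"
proof -
  have "integrable lborel (\<lambda>x. \<Sum>i\<le>degree p. coeff p i * (x ^ i * exp (- x\<^sup>2)))"
    apply (rule Bochner_Integration.integrable_sum)
    apply (rule integrable_mult_right)
    apply (rule mom_int)
    done
  moreover have "(\<lambda>x. \<Sum>i\<le>degree p. coeff p i * (x ^ i * exp (- x\<^sup>2))) = (\<lambda>x. poly p x * exp (- x\<^sup>2))"
    by (auto simp: poly_altdef sum_distrib_right mult.assoc)
  ultimately show ?thesis by simp
qed

lemma L_add: "L (p + q) = L p + L q"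
  unfolding L_def by (simp add: distrib_right L_int)

lemma L_diff: "L (p - q) = L p - L q"
  unfolding L_def by (simp add: left_diff_distrib L_int)

lemma L_smult: "L (smult c p) = c * L p"
  unfolding L_def by (simp add: mult.assoc)

lemma L_zero: "L 0 = 0" unfolding L_def by simp

lemma L_sum: "L (\<Sum>i\<in>A. f i) = (\<Sum>i\<in>A. L (f i))"
  by (induction A rule: infinite_finite_induct) (simp_all add: L_add L_zero)

lemma L_monom: "L (monom c k) = c * M k"
  unfolding L_def M_def by (simp add: poly_monom mult.assoc)

lemma L_ibp_monom: "L (pderiv (monom c k)) = L ([:0,2:] * monom c k)"
proof -
  have X: "[:0,2:] * monom c k = monom (2*c) (Suc k)"
    by (simp add: monom_Suc smult_monom)
  show ?thesis
  proof (cases k)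
    case 0 then show ?thesis unfolding X using M1 by (simp add: L_monom pderiv_monom L_zero)
  next
    case (Suc j)
    have "2 * M (Suc (Suc j)) = (1 + real j) * M j" using M_rec[of j] by (simp; metis add.commute mult.commute)
    then show ?thesis unfolding X using Suc by (simp add: L_monom pderiv_monom)
  qed
qed

lemma pderiv_sum': "pderiv (\<Sum>i\<in>A. f i) = (\<Sum>i\<in>A. pderiv (f i))"
  by (induction A rule: infinite_finite_induct) (auto simp: pderiv_add)

lemma L_ibp: "L (pderiv p) = L ([:0,2:] * p)"
proof -
  have "L (pderiv p) = L (pderiv (\<Sum>i\<le>degree p. monom (coeff p i) i))"
    by (simp add: poly_as_sum_of_monoms)
  also have "\<dots> = (\<Sum>i\<le>degree p. L ([:0,2:] * monom (coeff p i) i))"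
    by (simp add: pderiv_sum' L_sum L_ibp_monom)
  also have "\<dots> = L ([:0,2:] * (\<Sum>i\<le>degree p. monom (coeff p i) i))"
    by (simp add: L_sum sum_distrib_left)
  finally show ?thesis by (simp add: poly_as_sum_of_monoms)
qed

fun Hp :: "nat \<Rightarrow> real poly" where
  "Hp 0 = 1"
| "Hp (Suc n) = [:0,2:] * Hp n - pderiv (Hp n)"

declare Hp.simps(2)[simp del]

lemma Hp_deriv: "pderiv (Hp (Suc n)) = smult (2 * (real n + 1)) (Hp n)"
proof (induction n)
  case 0 then show ?case by (simp add: pderiv_pCons Hp.simps)
next
  case (Suc n)
  have "pderiv (Hp (Suc (Suc n))) = pderiv ([:0,2:] * Hp (Suc n)) - pderiv (pderiv (Hp (Suc n)))"
    by (simp only: Hp.simps(2) pderiv_diff)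
  also have "\<dots> = [:0,2:] * smult (2 * (real n + 1)) (Hp n) + smult 2 (Hp (Suc n))
       - smult (2 * (real n + 1)) (pderiv (Hp n))"
    using Suc by (simp add: pderiv_mult pderiv_pCons pderiv_smult)
  also have "\<dots> = smult 2 (Hp (Suc n)) + smult (2 * (real n + 1)) (Hp (Suc n))"
    unfolding Hp.simps(2)[of n] smult_diff_right mult_smult_right by simp
  also have "\<dots> = smult (2 * (real (Suc n) + 1)) (Hp (Suc n))"
    by (simp add: algebra_simps smult_add_left[symmetric])
  finally show ?case .
qed

lemma Hp_norm: "L (Hp n * Hp n) = 2 ^ n * fact n * sqrt pi"
proof (induction n)
  case 0 then show ?case using L_monom[of 1 0] M0 by (simp add: monom_0 one_pCons)
next
  case (Suc n)
  have "L (pderiv (Hp (Suc n) * Hp n)) = L ([:0,2:] * (Hp (Suc n) * Hp n))" by (rule L_ibp)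
  then have "L (Hp (Suc n) * pderiv (Hp n)) + L (Hp n * pderiv (Hp (Suc n)))
      = L ([:0,2:] * (Hp (Suc n) * Hp n))"
    by (simp add: pderiv_mult L_add)
  moreover have "L (Hp (Suc n) * Hp (Suc n)) = L ([:0,2:] * (Hp (Suc n) * Hp n)) - L (Hp (Suc n) * pderiv (Hp n))"
  proof -
    have "Hp (Suc n) * Hp (Suc n) = Hp (Suc n) * ([:0,2:] * Hp n - pderiv (Hp n))"
      by (metis Hp.simps(2))
    also have "\<dots> = [:0,2:] * (Hp (Suc n) * Hp n) - Hp (Suc n) * pderiv (Hp n)"
      by (simp only: right_diff_distrib mult.left_commute)
    finally show ?thesis by (simp only: L_diff)
  qed
  ultimately have "L (Hp (Suc n) * Hp (Suc n)) = L (Hp n * pderiv (Hp (Suc n)))" by simp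
  also have "\<dots> = 2 * (real n + 1) * L (Hp n * Hp n)"
    by (simp add: Hp_deriv L_smult)
  finally show ?case using Suc by simp
qed


lemma deriv_gauss: "(deriv ^^ n) (\<lambda>s. exp (- (s\<^sup>2))) = (\<lambda>s. (-1)^n * poly (Hp n) s * exp (- (s\<^sup>2)))"
proof (induction n)
  case 0 then show ?case by simp
next
  case (Suc n)
  have "(deriv ^^ Suc n) (\<lambda>s. exp (- (s\<^sup>2))) = deriv ((deriv ^^ n) (\<lambda>s. exp (- (s\<^sup>2))))" by simp
  also have "\<dots> = (\<lambda>s. (-1)^(Suc n) * poly (Hp (Suc n)) s * exp (- (s\<^sup>2)))"
  proof
    fix t :: real
    have "((\<lambda>s. (-1)^n * poly (Hp n) s * exp (- (s\<^sup>2))) has_real_derivative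
      ((-1)^n * poly (pderiv (Hp n)) t * exp (- (t\<^sup>2)) + (-1)^n * poly (Hp n) t * (exp (- (t\<^sup>2)) * (- (2 * t))))) (at t)"
      by (auto intro!: derivative_eq_intros)
    moreover have "(-1)^n * poly (pderiv (Hp n)) t * exp (- (t\<^sup>2)) + (-1)^n * poly (Hp n) t * (exp (- (t\<^sup>2)) * (- (2 * t)))
        = (-1)^(Suc n) * poly (Hp (Suc n)) t * exp (- (t\<^sup>2))"
      by (simp add: Hp.simps(2) algebra_simps)
    ultimately show "deriv ((deriv ^^ n) (\<lambda>s. exp (- (s\<^sup>2)))) t = (-1)^(Suc n) * poly (Hp (Suc n)) t * exp (- (t\<^sup>2))"
      using Suc by (simp add: DERIV_imp_deriv)
  qed
  finally show ?case .
qed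

lemma hermite_poly_eq: "hermite_poly n t = poly (Hp n) t"
proof -
  have "hermite_poly n t = ((-1)^n * (-1)^n) * (exp (t\<^sup>2) * exp (- (t\<^sup>2))) * poly (Hp n) t"
    unfolding hermite_poly_def deriv_gauss by (simp add: algebra_simps)
  also have "\<dots> = poly (Hp n) t"
    by (simp add: exp_minus power_mult_distrib[symmetric])
  finally show ?thesis .
qed

lemma M_nonneg_even: "M (2*k) \<ge> 0"
  by (simp add: M_even)

lemma M_le: "i \<ge> 1 \<Longrightarrow> M (2*i) \<le> fact i"
proof (induction i rule: nat_induct_at_least)
  case base
  have "sqrt pi \<le> sqrt 4" using pi_less_4 by (intro real_sqrt_le_mono) simp
  then have "sqrt pi \<le> 2" by simp
  moreover have "M 2 = sqrt pi / 2" using M_rec[of 0] M0 by (simp add: numeral_2_eq_2)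
  ultimately show ?case by simp
next
  case (Suc i)
  have "M (2 * Suc i) = (real (2*i) + 1) / 2 * M (2*i)" using M_rec[of "2*i"] by simp
  also have "\<dots> \<le> (real i + 1) * fact i"
    using Suc.IH M_nonneg_even[of i] by (intro mult_mono) auto
  finally show ?case by (simp add: algebra_simps)
qed

lemma amgm: "(l::real) > 0 \<Longrightarrow> 2 * x * y \<le> l * x\<^sup>2 + y\<^sup>2 / l"
proof -
  assume l: "l > 0"
  have "0 \<le> (l * x - y)\<^sup>2" by simp
  then have "2 * x * y * l \<le> (l * x\<^sup>2 + y\<^sup>2 / l) * l"
    using l by (simp add: power2_eq_square algebra_simps)
  then show ?thesis using l by simp
qed


theorem proposition3p1:
  fixes n i :: nat
  assumes "n \<ge> 1" and "i \<ge> 1"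
  shows "(\<integral>\<^sup>+ t. ennreal (\<bar>t\<bar> ^ i / fact i * \<bar>hermite_fun n t\<bar>) \<partial>lborel)
           \<le> ennreal (1 / sqrt (2 ^ n * fact n * fact i * sqrt pi))"
proof -
  define C :: real where "C = 2 ^ n * fact n * sqrt pi"
  define F :: real where "F = fact i"
  define H where "H = Hp n"
  have Cpos: "C > 0" unfolding C_def by simp
  have Fpos: "F > 0" unfolding F_def by simp
  define a where "a = sqrt C"
  define b where "b = sqrt F"
  have apos: "a > 0" and bpos: "b > 0" using Cpos Fpos unfolding a_def b_def by auto
  have Ca: "C = a\<^sup>2" and Fb: "F = b\<^sup>2" using Cpos Fpos unfolding a_def b_def by auto
  define l where "l = a / b"
  have lpos: "l > 0" unfolding l_def using apos bpos by simp
  define q where "q = smult l (monom 1 (2*i)) + smult (1/l) (H*H)"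
  define g where "g t = poly q t * exp (- t\<^sup>2) * (1 / (2 * F * C))" for t
  have hf: "hermite_fun n t = exp (- t\<^sup>2) * poly H t / C" for t
    unfolding hermite_fun_def hermite_poly_eq H_def C_def by simp
  have polyq: "poly q t = l * (\<bar>t\<bar>^i)\<^sup>2 + (\<bar>poly H t\<bar>)\<^sup>2 / l" for t
    unfolding q_def by (simp add: poly_monom power_mult power2_eq_square power_mult_distrib[symmetric]
       flip: power_even_abs_numeral)
  have pt: "\<bar>t\<bar> ^ i / fact i * \<bar>hermite_fun n t\<bar> \<le> g t" for t
  proof -
    have "\<bar>t\<bar> ^ i / fact i * \<bar>hermite_fun n t\<bar> = (2 * \<bar>t\<bar>^i * \<bar>poly H t\<bar>) * (exp (- t\<^sup>2) * (1 / (2 * F * C)))"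
      unfolding hf F_def using Cpos by (simp add: abs_mult field_simps)
    also have "\<dots> \<le> poly q t * (exp (- t\<^sup>2) * (1 / (2 * F * C)))"
      unfolding polyq using Cpos Fpos lpos by (intro mult_right_mono amgm) auto
    finally show ?thesis unfolding g_def by (simp add: mult.assoc)
  qed
  have gnn: "g t \<ge> 0" for t
    unfolding g_def polyq using Cpos Fpos lpos by (intro mult_nonneg_nonneg add_nonneg_nonneg) auto
  have gint: "integrable lborel g"
    unfolding g_def by (intro integrable_mult_left L_int)
  have Lq: "L q = l * M (2*i) + (1/l) * C"
    unfolding q_def by (simp add: L_add L_smult L_monom H_def Hp_norm C_def)
  have intg: "(\<integral>t. g t \<partial>lborel) = L q * (1 / (2 * F * C))"
    unfolding g_def L_def by simp
  have "(\<integral>\<^sup>+ t. ennreal (\<bar>t\<bar> ^ i / fact i * \<bar>hermite_fun n t\<bar>) \<partial>lborel) \<le> (\<integral>\<^sup>+ t. ennreal (g t) \<partial>lborel)"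
    by (intro nn_integral_mono ennreal_leI pt)
  also have "\<dots> = ennreal (\<integral>t. g t \<partial>lborel)"
    by (intro nn_integral_eq_integral gint AE_I2 gnn)
  also have "\<dots> \<le> ennreal (1 / sqrt (2 ^ n * fact n * fact i * sqrt pi))"
  proof (intro ennreal_leI)
    have Mle: "M (2*i) \<le> b\<^sup>2" using M_le[OF assms(2)] Fb F_def by simp
    have "(\<integral>t. g t \<partial>lborel) = (l * M (2*i) + (1/l) * C) / (2 * F * C)"
      unfolding intg Lq by simp
    also have "\<dots> \<le> (l * b\<^sup>2 + (1/l) * C) / (2 * F * C)"
      using Mle lpos Cpos Fpos by (intro divide_right_mono add_right_mono mult_left_mono) auto
    also have "\<dots> = 1 / (a * b)"
      unfolding l_def Ca Fb using apos bpos by (simp add: field_simps power2_eq_square)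
    also have "a * b = sqrt (2 ^ n * fact n * fact i * sqrt pi)"
      unfolding a_def b_def C_def F_def by (simp add: real_sqrt_mult[symmetric] ac_simps)
    finally show "(\<integral>t. g t \<partial>lborel) \<le> 1 / sqrt (2 ^ n * fact n * fact i * sqrt pi)" .
  qed
  finally show ?thesis .
qed

end
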